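(* Let $\theta$ be a congruence of a fuzzy automaton $\mathcal F=(A,X,f)$. Then for each $i\in\{1,2,3\}$, $D_i(\mathcal F)\subseteq D_i(\mathcal F/\theta)$, and if $\mathcal F$ is D$i$-directable, then so is $\mathcal F/\theta$.
   Context: A fuzzy automaton is a triple $\mathcal F=(A,X,f)$ with $A$ a finite nonempty set of states, $X$ a finite nonempty alphabet, and $f:A\times X\times A\to[0,1]$, extended to words by $f^*(a,\varepsilon,a)=1$, $f^*(a,\varepsilon,b)=0$ ($b\neq a$), $f^*(a,vx,b)=\max_{c\in A}\min\{f^*(a,v,c),f(c,x,b)\}$. Let $\mathcal F(a,w)=\{b\in A\mid f^*(a,w,b)>0\}$. A word $w\in X^*$ is D1-directing for $\mathcal F$ if there is $c\in A$ with $\mathcal F(a,w)=\{c\}$ for all $a\in A$; D2-directing if $\mathcal F(a,w)=\mathcal F(b,w)$ for all $a,b\in A$; D3-directing if there is $c\in A$ with $c\in\mathcal F(a,w)$ for all $a\in A$. $D_i(\mathcal F)$ is the set of D$i$-directing words, and $\mathcal F$ is D$i$-directable if $D_i(\mathcal F)\neq\emptyset$. A congruence of $\mathcal F$ is an equivalence relation $\theta$ on $A$ such that whenever $a\,\theta\,a'$, then for all $x\in X$ and $b\in A$, $\max\{f(a,x,b')\mid b'\in[b]\}=\max\{f(a',x,b')\mid b'\in[b]\}$, where $[b]$ is the $\theta$-class of $b$. The quotient automaton is $\mathcal F/\theta=(A/\theta,X,f_\theta)$ with $f_\theta([a],x,[b])=\max\{f(a',x,b')\mid a'\in[a],\ b'\in[b]\}$.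 *)

theory Defs
  imports Complex_Main
begin

definition fuzzy_automaton :: "'a set \<Rightarrow> 'x set \<Rightarrow> ('a \<Rightarrow> 'x \<Rightarrow> 'a \<Rightarrow> real) \<Rightarrow> bool" where
  "fuzzy_automaton A X f \<longleftrightarrow> finite A \<and> A \<noteq> {} \<and> finite X \<and> X \<noteq> {} \<and>
     (\<forall>a\<in>A. \<forall>x\<in>X. \<forall>b\<in>A. 0 \<le> f a x b \<and> f a x b \<le> 1)"

text \<open>Extension to words, processed from the right end: the argument list is the
reversed word.\<close>
fun fstar_rev :: "'a set \<Rightarrow> ('a \<Rightarrow> 'x \<Rightarrow> 'a \<Rightarrow> real) \<Rightarrow> 'a \<Rightarrow> 'x list \<Rightarrow> 'a \<Rightarrow> real" where
  "fstar_rev A f a [] b = (if a = b then 1 else 0)"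
| "fstar_rev A f a (x # rw) b = Max ((\<lambda>c. min (fstar_rev A f a rw c) (f c x b)) ` A)"

definition fstar :: "'a set \<Rightarrow> ('a \<Rightarrow> 'x \<Rightarrow> 'a \<Rightarrow> real) \<Rightarrow> 'a \<Rightarrow> 'x list \<Rightarrow> 'a \<Rightarrow> real" where
  "fstar A f a w b = fstar_rev A f a (rev w) b"

definition reach :: "'a set \<Rightarrow> ('a \<Rightarrow> 'x \<Rightarrow> 'a \<Rightarrow> real) \<Rightarrow> 'a \<Rightarrow> 'x list \<Rightarrow> 'a set" where
  "reach A f a w = {b \<in> A. fstar A f a w b > 0}"

definition D1 :: "'a set \<Rightarrow> 'x set \<Rightarrow> ('a \<Rightarrow> 'x \<Rightarrow> 'a \<Rightarrow> real) \<Rightarrow> 'x list set" where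
  "D1 A X f = {w \<in> lists X. \<exists>c\<in>A. \<forall>a\<in>A. reach A f a w = {c}}"

definition D2 :: "'a set \<Rightarrow> 'x set \<Rightarrow> ('a \<Rightarrow> 'x \<Rightarrow> 'a \<Rightarrow> real) \<Rightarrow> 'x list set" where
  "D2 A X f = {w \<in> lists X. \<forall>a\<in>A. \<forall>b\<in>A. reach A f a w = reach A f b w}"

definition D3 :: "'a set \<Rightarrow> 'x set \<Rightarrow> ('a \<Rightarrow> 'x \<Rightarrow> 'a \<Rightarrow> real) \<Rightarrow> 'x list set" where
  "D3 A X f = {w \<in> lists X. \<exists>c\<in>A. \<forall>a\<in>A. c \<in> reach A f a w}"

definition Dset :: "nat \<Rightarrow> 'a set \<Rightarrow> 'x set \<Rightarrow> ('a \<Rightarrow> 'x \<Rightarrow> 'a \<Rightarrow> real) \<Rightarrow> 'x list set" where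
  "Dset i A X f = (if i = 1 then D1 A X f else if i = 2 then D2 A X f else D3 A X f)"

definition directable :: "nat \<Rightarrow> 'a set \<Rightarrow> 'x set \<Rightarrow> ('a \<Rightarrow> 'x \<Rightarrow> 'a \<Rightarrow> real) \<Rightarrow> bool" where
  "directable i A X f \<longleftrightarrow> Dset i A X f \<noteq> {}"

definition congruence :: "'a set \<Rightarrow> 'x set \<Rightarrow> ('a \<Rightarrow> 'x \<Rightarrow> 'a \<Rightarrow> real) \<Rightarrow> 'a rel \<Rightarrow> bool" where
  "congruence A X f \<theta> \<longleftrightarrow> equiv A \<theta> \<and>
     (\<forall>a a'. (a, a') \<in> \<theta> \<longrightarrow> (\<forall>x\<in>X. \<forall>b\<in>A.
        Max (f a x ` (\<theta> `` {b})) = Max (f a' x ` (\<theta> `` {b}))))"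

definition quot_states :: "'a set \<Rightarrow> 'a rel \<Rightarrow> 'a set set" where
  "quot_states A \<theta> = A // \<theta>"

definition quot_trans :: "('a \<Rightarrow> 'x \<Rightarrow> 'a \<Rightarrow> real) \<Rightarrow> 'a set \<Rightarrow> 'x \<Rightarrow> 'a set \<Rightarrow> real" where
  "quot_trans f P x Q = Max {f a' x b' | a' b'. a' \<in> P \<and> b' \<in> Q}"

end

theory Submission
  imports Defs
begin

lemma cls_facts:
  assumes eq: "equiv A \<theta>" and Q: "Q \<in> A // \<theta>"
  shows "Q \<subseteq> A" "Q \<noteq> {}" "b \<in> Q \<Longrightarrow> Q = \<theta> `` {b}"
    "a \<in> A \<Longrightarrow> (a \<in> Q) = (Q = \<theta> `` {a})"
proof -
  obtain c where c: "c \<in> A" "Q = \<theta> `` {c}" using Q by (auto elim: quotientE)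
  show "Q \<subseteq> A" using eq c by (auto simp: equiv_def refl_on_def)
  show "Q \<noteq> {}" using eq c equiv_class_self by fastforce
  show "b \<in> Q \<Longrightarrow> Q = \<theta> `` {b}" using eq c
    by (metis Image_singleton_iff equiv_class_eq_iff)
  show "a \<in> A \<Longrightarrow> (a \<in> Q) = (Q = \<theta> `` {a})" using eq c
    by (metis Image_singleton_iff equiv_class_eq_iff equiv_class_self)
qed

lemma key:
  assumes FA: "fuzzy_automaton A X f" and C: "congruence A X f \<theta>"
  shows "rw \<in> lists X \<Longrightarrow> a \<in> A \<Longrightarrow> Q \<in> A // \<theta> \<Longrightarrow>
    (fstar_rev (A // \<theta>) (quot_trans f) (\<theta> `` {a}) rw Q > 0) = (\<exists>b\<in>Q. fstar_rev A f a rw b > 0)"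
proof (induction rw arbitrary: Q)
  case Nil
  have eq: "equiv A \<theta>" using C by (simp add: congruence_def)
  show ?case using cls_facts(4)[OF eq Nil(3) Nil(2)] by auto
next
  case (Cons x rw)
  have eq: "equiv A \<theta>" using C by (simp add: congruence_def)
  have finA: "finite A" "A \<noteq> {}" using FA by (auto simp: fuzzy_automaton_def)
  have finQ: "finite (A // \<theta>)" using finA(1) eq
    by (metis Union_quotient finite_UnionD)
  have neQ: "A // \<theta> \<noteq> {}" using finA(2) by (simp add: quotient_def)
  have x: "x \<in> X" using Cons(2) by simp
  have rw: "rw \<in> lists X" using Cons(2) by simp
  have QA: "Q \<subseteq> A" "Q \<noteq> {}" using cls_facts[OF eq Cons(4)] by auto
  have finQ': "finite Q" using QA finA rev_finite_subset by blast
  have qt: "(quot_trans f P x Q > 0) = (\<exists>a'\<in>P. \<exists>b'\<in>Q. f a' x b' > 0)"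
    if P: "P \<in> A // \<theta>" for P
  proof -
    have PA: "P \<subseteq> A" "P \<noteq> {}" using cls_facts[OF eq P] by auto
    have "finite P" using PA finA rev_finite_subset by blast
    hence fin: "finite {f a' x b' | a' b'. a' \<in> P \<and> b' \<in> Q}"
      using finQ' by (simp add: finite_image_set2)
    have ne: "{f a' x b' | a' b'. a' \<in> P \<and> b' \<in> Q} \<noteq> {}" using PA QA by blast
    show ?thesis unfolding quot_trans_def using Max_gr_iff[OF fin ne] by blast
  qed
  have congQ: "(\<exists>b'\<in>Q. f a' x b' > 0) \<Longrightarrow> (\<exists>b'\<in>Q. f c x b' > 0)"
    if "(a', c) \<in> \<theta>" for a' c
  proof -
    assume h: "\<exists>b'\<in>Q. f a' x b' > 0"
    obtain b where b: "b \<in> A" "Q = \<theta> `` {b}" using Cons(4) by (auto elim: quotientE)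
    have "Max (f a' x ` Q) = Max (f c x ` Q)" using C that x b
      by (auto simp: congruence_def)
    moreover have "0 < Max (f a' x ` Q)" using h Max_gr_iff finQ' QA by auto
    ultimately have "0 < Max (f c x ` Q)" by simp
    thus ?thesis using Max_gr_iff finQ' QA by auto
  qed
  have "(fstar_rev (A // \<theta>) (quot_trans f) (\<theta> `` {a}) (x # rw) Q > 0) =
    (\<exists>P\<in>A // \<theta>. fstar_rev (A // \<theta>) (quot_trans f) (\<theta> `` {a}) rw P > 0 \<and> quot_trans f P x Q > 0)"
    using Max_gr_iff[of "(\<lambda>c. min (fstar_rev (A // \<theta>) (quot_trans f) (\<theta> `` {a}) rw c) (quot_trans f c x Q)) ` (A // \<theta>)" 0]
      finQ neQ by auto
  also have "\<dots> = (\<exists>P\<in>A // \<theta>. (\<exists>c\<in>P. fstar_rev A f a rw c > 0) \<and> (\<exists>a'\<in>P. \<exists>b'\<in>Q. f a' x b' > 0))"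
    using Cons.IH[OF rw Cons(3)] qt by auto
  also have "\<dots> = (\<exists>c\<in>A. fstar_rev A f a rw c > 0 \<and> (\<exists>b'\<in>Q. f c x b' > 0))"
  proof
    assume "\<exists>P\<in>A // \<theta>. (\<exists>c\<in>P. fstar_rev A f a rw c > 0) \<and> (\<exists>a'\<in>P. \<exists>b'\<in>Q. f a' x b' > 0)"
    then obtain P c a' b' where P: "P \<in> A // \<theta>" "c \<in> P" "fstar_rev A f a rw c > 0"
      "a' \<in> P" "b' \<in> Q" "f a' x b' > 0" by blast
    have "(a', c) \<in> \<theta>" using P eq
      by (metis quotient_eq_iff)
    moreover have "c \<in> A" using cls_facts(1)[OF eq P(1)] P by auto
    ultimately show "\<exists>c\<in>A. fstar_rev A f a rw c > 0 \<and> (\<exists>b'\<in>Q. f c x b' > 0)"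
      using congQ P by blast
  next
    assume "\<exists>c\<in>A. fstar_rev A f a rw c > 0 \<and> (\<exists>b'\<in>Q. f c x b' > 0)"
    then obtain c where c: "c \<in> A" "fstar_rev A f a rw c > 0" "\<exists>b'\<in>Q. f c x b' > 0" by blast
    have "\<theta> `` {c} \<in> A // \<theta>" "c \<in> \<theta> `` {c}" using c eq
      using quotientI equiv_class_self by (metis, metis)
    thus "\<exists>P\<in>A // \<theta>. (\<exists>c\<in>P. fstar_rev A f a rw c > 0) \<and> (\<exists>a'\<in>P. \<exists>b'\<in>Q. f a' x b' > 0)"
      using c by blast
  qed
  also have "\<dots> = (\<exists>b\<in>Q. fstar_rev A f a (x # rw) b > 0)"
  proof -
    have "\<And>b. (fstar_rev A f a (x # rw) b > 0) = (\<exists>c\<in>A. fstar_rev A f a rw c > 0 \<and> f c x b > 0)"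
      using Max_gr_iff[of "(\<lambda>c. min (fstar_rev A f a rw c) (f c x _)) ` A" 0] finA by auto
    thus ?thesis by blast
  qed
  finally show ?case .
qed

lemma reach_q:
  assumes FA: "fuzzy_automaton A X f" and C: "congruence A X f \<theta>"
    and w: "w \<in> lists X" and a: "a \<in> A"
  shows "reach (quot_states A \<theta>) (quot_trans f) (\<theta> `` {a}) w
     = {Q \<in> A // \<theta>. \<exists>b\<in>Q. b \<in> reach A f a w}"
proof -
  have eq: "equiv A \<theta>" using C by (simp add: congruence_def)
  have "rev w \<in> lists X" using w by (simp add: in_lists_conv_set)
  thus ?thesis using key[OF FA C _ a] cls_facts(1)[OF eq]
    unfolding reach_def quot_states_def fstar_def by blast
qed

theorem corollary6p5:
  fixes A :: "'a set" and X :: "'x set" and f :: "'a \<Rightarrow> 'x \<Rightarrow> 'a \<Rightarrow> real"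
    and \<theta> :: "'a rel"
  assumes "fuzzy_automaton A X f"
    and "congruence A X f \<theta>"
  shows "\<forall>i\<in>{1, 2, 3::nat}.
           Dset i A X f \<subseteq> Dset i (quot_states A \<theta>) X (quot_trans f)
         \<and> (directable i A X f \<longrightarrow> directable i (quot_states A \<theta>) X (quot_trans f))"
proof -
  note R = reach_q[OF assms]
  have eq: "equiv A \<theta>" using assms(2) by (simp add: congruence_def)
  have allQ: "\<And>P. P \<in> quot_states A \<theta> \<Longrightarrow> \<exists>a\<in>A. P = \<theta> `` {a}"
    unfolding quot_states_def by (auto elim: quotientE)
  have s1: "D1 A X f \<subseteq> D1 (quot_states A \<theta>) X (quot_trans f)"
  proof
    fix w assume "w \<in> D1 A X f"
    then obtain c where w: "w \<in> lists X" "c \<in> A" "\<And>a. a \<in> A \<Longrightarrow> reach A f a w = {c}"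
      unfolding D1_def by blast
    have cq: "\<theta> `` {c} \<in> quot_states A \<theta>" using w(2) by (simp add: quot_states_def quotientI)
    have "reach (quot_states A \<theta>) (quot_trans f) P w = {\<theta> `` {c}}"
      if P: "P \<in> quot_states A \<theta>" for P
    proof -
      obtain a where a: "a \<in> A" "P = \<theta> `` {a}" using allQ[OF P] by blast
      have "{Q \<in> A // \<theta>. \<exists>b\<in>Q. b \<in> {c}} = {\<theta> `` {c}}"
      proof (intro equalityI subsetI)
        fix Q assume "Q \<in> {Q \<in> A // \<theta>. \<exists>b\<in>Q. b \<in> {c}}"
        then have "Q \<in> A // \<theta>" "c \<in> Q" by auto
        thus "Q \<in> {\<theta> `` {c}}" using cls_facts(3)[OF eq] by blast
      next
        fix Q assume "Q \<in> {\<theta> `` {c}}"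
        then show "Q \<in> {Q \<in> A // \<theta>. \<exists>b\<in>Q. b \<in> {c}}"
          using cq w(2) eq equiv_class_self[OF eq w(2)] by (simp add: quot_states_def)
      qed
      then show ?thesis unfolding a(2) R[OF w(1) a(1)] w(3)[OF a(1)] .
    qed
    thus "w \<in> D1 (quot_states A \<theta>) X (quot_trans f)" using w(1) cq unfolding D1_def by blast
  qed
  have s2: "D2 A X f \<subseteq> D2 (quot_states A \<theta>) X (quot_trans f)"
  proof
    fix w assume "w \<in> D2 A X f"
    then have w: "w \<in> lists X" "\<And>a b. a \<in> A \<Longrightarrow> b \<in> A \<Longrightarrow> reach A f a w = reach A f b w"
      unfolding D2_def by blast+
    have "reach (quot_states A \<theta>) (quot_trans f) P w = reach (quot_states A \<theta>) (quot_trans f) P' w"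
      if P: "P \<in> quot_states A \<theta>" and P': "P' \<in> quot_states A \<theta>" for P P'
    proof -
      obtain a where a: "a \<in> A" "P = \<theta> `` {a}" using allQ[OF P] by blast
      obtain b where b: "b \<in> A" "P' = \<theta> `` {b}" using allQ[OF P'] by blast
      show ?thesis unfolding a(2) b(2) R[OF w(1) a(1)] R[OF w(1) b(1)] w(2)[OF a(1) b(1)] ..
    qed
    thus "w \<in> D2 (quot_states A \<theta>) X (quot_trans f)"
      unfolding D2_def using w(1) by blast
  qed
  have s3: "D3 A X f \<subseteq> D3 (quot_states A \<theta>) X (quot_trans f)"
  proof
    fix w assume "w \<in> D3 A X f"
    then obtain c where w: "w \<in> lists X" "c \<in> A" "\<And>a. a \<in> A \<Longrightarrow> c \<in> reach A f a w"
      unfolding D3_def by blast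
    have cq: "\<theta> `` {c} \<in> quot_states A \<theta>" using w(2) by (simp add: quot_states_def quotientI)
    have cc: "c \<in> \<theta> `` {c}" using equiv_class_self[OF eq w(2)] .
    have "\<theta> `` {c} \<in> reach (quot_states A \<theta>) (quot_trans f) P w"
      if P: "P \<in> quot_states A \<theta>" for P
    proof -
      obtain a where a: "a \<in> A" "P = \<theta> `` {a}" using allQ[OF P] by blast
      have "\<theta> `` {c} \<in> A // \<theta>" using cq by (simp add: quot_states_def)
      then show ?thesis unfolding a(2) R[OF w(1) a(1)] using w(3)[OF a(1)] cc by blast
    qed
    thus "w \<in> D3 (quot_states A \<theta>) X (quot_trans f)" using w(1) cq unfolding D3_def by blast
  qed
  show ?thesis using s1 s2 s3 unfolding directable_def Dset_def by auto
qed

end
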